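(* For every finite simple graph $G$, $\vartheta(G)=\alpha_{\mathcal S}(G)$.
   Context: $G$ has vertex set $\{1,\dots,n\}$. A weighted adjacency matrix of $G$ is a real symmetric $n\times n$ matrix $A$ with $A_{ii}=0$ and $A_{ij}=0$ whenever $i\ne j$ are non-adjacent. $\vartheta(G)=\inf_B\lambda_{\max}(B)$ over real symmetric $B$ with $B_{ij}=1$ whenever $i=j$ or $i,j$ non-adjacent (the Lovász theta function). With $\boldsymbol 1$ the all-ones vector and $\mathcal S_n=\{\boldsymbol v\in\mathbb R^n:\langle\boldsymbol 1,\boldsymbol v\rangle=|\boldsymbol v|^2\}$, the spherical independence number is $\alpha_{\mathcal S}(G)=\inf_A\sup\{|\boldsymbol v|^2:\boldsymbol v\in\mathcal S_n,\ \langle\boldsymbol v,A\boldsymbol v\rangle=0\}$, the infimum over all weighted adjacency matrices $A$ of $G$. *)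

theory Defs
  imports "HOL-Analysis.Analysis"
begin

definition simple_graph :: "('n::finite \<Rightarrow> 'n \<Rightarrow> bool) \<Rightarrow> bool" where
  "simple_graph E \<longleftrightarrow> (\<forall>i j. E i j \<longrightarrow> E j i) \<and> (\<forall>i. \<not> E i i)"

definition symmetric_matrix :: "real^'n^'n \<Rightarrow> bool" where
  "symmetric_matrix M \<longleftrightarrow> transpose M = M"

definition weighted_adj :: "('n::finite \<Rightarrow> 'n \<Rightarrow> bool) \<Rightarrow> real^'n^'n \<Rightarrow> bool" where
  "weighted_adj E A \<longleftrightarrow> symmetric_matrix A \<and> (\<forall>i. A$i$i = 0)
      \<and> (\<forall>i j. i \<noteq> j \<and> \<not> E i j \<longrightarrow> A$i$j = 0)"

definition lambda_max :: "real^'n^'n \<Rightarrow> real" where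
  "lambda_max B = Sup {l. \<exists>v. v \<noteq> 0 \<and> B *v v = l *\<^sub>R v}"

definition lovasz_theta :: "('n::finite \<Rightarrow> 'n \<Rightarrow> bool) \<Rightarrow> real" where
  "lovasz_theta E = Inf {lambda_max B | B. symmetric_matrix B \<and>
      (\<forall>i j. (i = j \<or> \<not> E i j) \<longrightarrow> B$i$j = 1)}"

definition ones :: "real^'n" where
  "ones = (\<chi> i. 1)"

definition sphere_S :: "(real^'n) set" where
  "sphere_S = {v. ones \<bullet> v = (norm v)^2}"

definition spherical_alpha :: "('n::finite \<Rightarrow> 'n \<Rightarrow> bool) \<Rightarrow> real" where
  "spherical_alpha E = Inf {Sup {(norm v)^2 | v. v \<in> sphere_S \<and> v \<bullet> (A *v v) = 0} | A. weighted_adj E A}"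

end

theory Submission
  imports Defs
begin

lemma sym_inner:
  assumes "symmetric_matrix B"
  shows "x \<bullet> (B *v y) = y \<bullet> (B *v x)"
proof -
  have "x \<bullet> (B *v y) = (x v* B) \<bullet> y" by (simp add: dot_lmul_matrix)
  also have "x v* B = B *v x"
    using assms unfolding symmetric_matrix_def by (metis vector_transpose_matrix)
  finally show ?thesis by (simp add: inner_commute)
qed

lemma quad_scale: fixes B :: "real^'n^'n" shows "(c *\<^sub>R x) \<bullet> (B *v (c *\<^sub>R x)) = c^2 * (x \<bullet> (B *v x))"
  proof -
  have "B *v (c *\<^sub>R x) = c *\<^sub>R (B *v x)" by (rule matrix_vector_mult_scaleR)
  then show ?thesis by (simp add: power2_eq_square)
qed

lemma quad_add:
  assumes "symmetric_matrix B"
  shows "(x + y) \<bullet> (B *v (x + y)) = x \<bullet> (B *v x) + 2 * (y \<bullet> (B *v x)) + y \<bullet> (B *v y)"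
  using sym_inner[OF assms, of x y]
  by (simp add: matrix_vector_right_distrib inner_add_left inner_add_right)

lemma rayleigh:
  fixes B :: "real^'n^'n"
  assumes sym: "symmetric_matrix B"
  shows "\<exists>m. (\<exists>v. v \<noteq> 0 \<and> B *v v = m *\<^sub>R v) \<and> (\<forall>x. x \<bullet> (B *v x) \<le> m * (norm x)^2)"
proof -
  define f where "f = (\<lambda>x::real^'n. x \<bullet> (B *v x))"
  have cont: "continuous_on (sphere 0 1) f"
    unfolding f_def by (intro continuous_intros)
  have ne: "sphere (0::real^'n) 1 \<noteq> {}" by simp
  obtain x0 where x0: "x0 \<in> sphere 0 1" and mx: "\<And>y. y \<in> sphere 0 1 \<Longrightarrow> f y \<le> f x0"
    using continuous_attains_sup[OF compact_sphere ne cont] by blast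
  define m where "m = f x0"
  have bound: "f x \<le> m * (norm x)^2" for x
  proof (cases "x = 0")
    case True then show ?thesis by (simp add: f_def)
  next
    case False
    have "(inverse (norm x)) *\<^sub>R x \<in> sphere 0 1" using False by simp
    then have "f ((inverse (norm x)) *\<^sub>R x) \<le> m" using mx m_def by blast
    moreover have "f ((inverse (norm x)) *\<^sub>R x) = (inverse (norm x))^2 * f x" by (simp only: f_def quad_scale)
    ultimately have "(inverse (norm x))^2 * f x \<le> m" by simp
    moreover have "norm x > 0" using False by simp
    ultimately show ?thesis by (simp add: field_simps power2_eq_square)
  qed
  define g where "g = (\<lambda>y. m * (norm y)^2 - f y)"
  have gnn: "g y \<ge> 0" for y using bound[of y] by (simp add: g_def)
  have gx0: "g x0 = 0" using x0 by (simp add: g_def m_def)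
  define w where "w = m *\<^sub>R x0 - B *v x0"
  have gexp: "g (x0 + t *\<^sub>R w) = g x0 + 2 * t * (w \<bullet> w) + t^2 * g w" for t
  proof -
    have "f (x0 + t *\<^sub>R w) = f x0 + 2 * t * (w \<bullet> (B *v x0)) + t^2 * f w"
      unfolding f_def using quad_add[OF sym, of x0 "t *\<^sub>R w"] quad_scale[of t w B] by simp
    moreover have "(norm (x0 + t *\<^sub>R w))^2 = (norm x0)^2 + 2 * t * (w \<bullet> x0) + t^2 * (norm w)^2"
      unfolding power2_norm_eq_inner by (simp add: inner_add_left inner_add_right inner_commute power2_eq_square algebra_simps)
    moreover have "w \<bullet> w = m * (w \<bullet> x0) - w \<bullet> (B *v x0)"
    proof -
      have "w \<bullet> (m *\<^sub>R x0 - B *v x0) = m * (w \<bullet> x0) - w \<bullet> (B *v x0)"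
        by (simp add: inner_diff_right)
      then show ?thesis by (simp only: w_def[symmetric])
    qed
    then have "m * (t * (w \<bullet> x0 * 2)) = t * (w \<bullet> w * 2) + t * (2 * (w \<bullet> (B *v x0)))"
    proof -
      assume h: "w \<bullet> w = m * (w \<bullet> x0) - w \<bullet> (B *v x0)"
      have "m * (t * (w \<bullet> x0 * 2)) = 2 * t * (m * (w \<bullet> x0))" by simp
      also have "\<dots> = 2 * t * (w \<bullet> w + w \<bullet> (B *v x0))" using h by simp
      finally show ?thesis by (simp add: algebra_simps)
    qed
    ultimately show ?thesis
      unfolding g_def by (simp add: algebra_simps)
  qed
  have "w = 0"
  proof (rule ccontr)
    assume "w \<noteq> 0"
    then have wp: "w \<bullet> w > 0" by simp
    define e where "e = (w \<bullet> w) / (g w + 1)"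
    have ep: "e > 0" using wp gnn[of w] by (simp add: e_def)
    have "e * g w < 2 * (w \<bullet> w)"
    proof -
      have "e * g w = (w \<bullet> w) * (g w / (g w + 1))" by (simp add: e_def)
      also have "\<dots> < (w \<bullet> w) * 2"
        using wp gnn[of w] by (intro mult_strict_left_mono) (simp_all add: field_simps)
      finally show ?thesis by simp
    qed
    then have "g (x0 + (-e) *\<^sub>R w) < 0"
      using gexp[of "-e"] gx0 ep by (simp add: power2_eq_square algebra_simps)
      (smt (verit) mult_strict_left_mono ep)
    with gnn show False by (meson not_le)
  qed
  then have "B *v x0 = m *\<^sub>R x0" by (simp add: w_def)
  moreover have "x0 \<noteq> 0" using x0 by auto
  ultimately show ?thesis using bound unfolding f_def by blast
qed

lemma pairwise_ineq:
  fixes q p :: "'a::real_vector \<Rightarrow> real"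
  assumes qe: "\<And>a x y. q (a *\<^sub>R x + y) = a^2 * q x + 2*a*bq x y + q y"
    and pe: "\<And>a x y. p (a *\<^sub>R x + y) = a^2 * p x + 2*a*bp x y + p y"
    and ps: "\<And>c x. p (c *\<^sub>R x) = c^2 * p x"
    and pos: "\<And>z. z \<noteq> 0 \<Longrightarrow> p z = 0 \<Longrightarrow> q z > 0"
    and px: "p x > 0" and py: "p y < 0"
  shows "q y * p x - p y * q x > 0"
proof -
  define b where "b = bp x y"
  define D where "D = b^2 - p x * p y"
  have Dp: "D > 0" unfolding D_def using px py
    by (smt (verit) mult_pos_neg zero_le_power2)
  define r where "r = sqrt D"
  have rp: "r > 0" and rr: "r^2 = D" using Dp by (auto simp: r_def)
  define a1 where "a1 = (- b + r) / p x"
  define a2 where "a2 = (- b - r) / p x"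
  have root: "a^2 * p x + 2*a*b + p y = 0" if "a = (- b + r) / p x \<or> a = (- b - r) / p x" for a
  proof -
    have "p x * a = - b + r \<or> p x * a = - b - r" using that px by auto
    then have "p x * a + b = r \<or> p x * a + b = - r" by auto
    then have "(p x * a + b)^2 = r^2" by (auto simp: power2_eq_square)
    then have "(p x * a + b)^2 = b^2 - p x * p y" using rr D_def by simp
    then have "p x * (a^2 * p x + 2*a*b + p y) = 0" by (simp add: power2_eq_square algebra_simps)
    then show ?thesis using px by simp
  qed
  have r1: "a1^2 * p x + 2*a1*b + p y = 0" using root a1_def by blast
  have r2: "a2^2 * p x + 2*a2*b + p y = 0" using root a2_def by blast
  have prod: "a1 * a2 = p y / p x"
  proof -
    have "a1 * a2 = ((-b)^2 - r^2) / (p x * p x)" unfolding a1_def a2_def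
      by (simp add: power2_eq_square algebra_simps)
    also have "\<dots> = (p x * p y) / (p x * p x)" using rr D_def by simp
    also have "\<dots> = p y / p x" using px by simp
    finally show ?thesis .
  qed
  have neg: "a1 * a2 < 0" using prod px py by (simp add: divide_neg_pos)
  have gt: "a1 > a2" unfolding a1_def a2_def using rp px by (simp add: divide_strict_right_mono)
  have a1p: "a1 > 0" and a2n: "a2 < 0" using neg gt
    by (smt (verit) mult_nonneg_nonneg mult_nonpos_nonpos)+
  have nz: "a *\<^sub>R x + y \<noteq> 0" for a
  proof
    assume "a *\<^sub>R x + y = 0"
    then have "y = (-a) *\<^sub>R x" by (simp add: eq_neg_iff_add_eq_0 add.commute)
    then have "p y = a^2 * p x" using ps[of "-a" x] by simp
    with px py show False by (smt (verit) mult_nonneg_nonneg zero_le_power2)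
  qed
  have z1: "p (a1 *\<^sub>R x + y) = 0" using pe r1 b_def by simp
  have z2: "p (a2 *\<^sub>R x + y) = 0" using pe r2 b_def by simp
  have h1: "a1^2 * q x + 2*a1*bq x y + q y > 0" using pos[OF nz z1] qe by simp
  have h2: "a2^2 * q x + 2*a2*bq x y + q y > 0" using pos[OF nz z2] qe by simp
  have "(-a2) * (a1^2 * q x + 2*a1*bq x y + q y) + a1 * (a2^2 * q x + 2*a2*bq x y + q y) > 0"
  proof -
    have "(-a2) * (a1^2 * q x + 2*a1*bq x y + q y) > 0" using h1 a2n by (simp add: mult_neg_pos)
    moreover have "a1 * (a2^2 * q x + 2*a2*bq x y + q y) > 0" using h2 a1p by simp
    ultimately show ?thesis by linarith
  qed
  moreover have "(-a2) * (a1^2 * q x + 2*a1*bq x y + q y) + a1 * (a2^2 * q x + 2*a2*bq x y + q y)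
      = (a1 - a2) * (q y - a1 * a2 * q x)" by (simp add: power2_eq_square algebra_simps)
  ultimately have "(a1 - a2) * (q y - a1 * a2 * q x) > 0" by simp
  then have "q y - a1 * a2 * q x > 0" using gt by (simp add: zero_less_mult_iff)
  then have "q y - p y / p x * q x > 0" using prod by simp
  then have "p x * (q y - p y / p x * q x) > 0" using px by simp
  then show ?thesis using px by (simp add: algebra_simps)
qed

lemma finsler:
  fixes q p :: "'a::real_vector \<Rightarrow> real"
  assumes qe: "\<And>a x y. q (a *\<^sub>R x + y) = a^2 * q x + 2*a*bq x y + q y"
    and pe: "\<And>a x y. p (a *\<^sub>R x + y) = a^2 * p x + 2*a*bp x y + p y"
    and ps: "\<And>c x. p (c *\<^sub>R x) = c^2 * p x"
    and pos: "\<And>z. z \<noteq> 0 \<Longrightarrow> p z = 0 \<Longrightarrow> q z > 0"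
    and q0: "q 0 = 0"
    and ex1: "\<exists>x. p x > 0" and ex2: "\<exists>y. p y < 0"
  shows "\<exists>t. \<forall>x. t * p x \<le> q x"
proof -
  define L where "L = {q y / p y | y. p y < 0}"
  obtain x0 where x0: "p x0 > 0" using ex1 by blast
  have Lne: "L \<noteq> {}" using ex2 L_def by blast
  have less: "l < q x / p x" if lL: "l \<in> L" and pxp: "p x > 0" for l x
  proof -
    obtain y where y: "l = q y / p y" "p y < 0" using lL L_def by blast
    have "q y * p x - p y * q x > 0" by (rule pairwise_ineq[OF qe pe ps pos pxp y(2)])
    then have "q y * p x > p y * q x" by simp
    then show ?thesis using y pxp
      by (simp add: divide_less_eq less_divide_eq mult.commute)
  qed
  have bdd: "bdd_above L" using less x0 by (meson bdd_aboveI less_le_not_le)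
  define t where "t = Sup L"
  have "t * p x \<le> q x" for x
  proof -
    consider "p x > 0" | "p x < 0" | "p x = 0" by linarith
    then show ?thesis
    proof cases
      case 1
      have "t \<le> q x / p x" unfolding t_def using less[OF _ 1] Lne
        by (meson cSup_least less_imp_le)
      then show ?thesis using 1 by (simp add: le_divide_eq)
    next
      case 2
      have "q x / p x \<in> L" using 2 L_def by blast
      then have "q x / p x \<le> t" unfolding t_def using bdd by (simp add: cSup_upper)
      then show ?thesis using 2 by (simp add: divide_le_eq)
    next
      case 3
      then show ?thesis using pos[of x] q0 by (cases "x = 0") auto
    qed
  qed
  then show ?thesis by blast
qed

lemma lam_char:
  fixes B :: "real^'n^'n"
  assumes sym: "symmetric_matrix B"
  shows "\<And>x. x \<bullet> (B *v x) \<le> lambda_max B * (norm x)^2"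
    and "\<And>c. (\<And>x. x \<bullet> (B *v x) \<le> c * (norm x)^2) \<Longrightarrow> lambda_max B \<le> c"
proof -
  obtain m where hm: "(\<exists>v. v \<noteq> 0 \<and> B *v v = m *\<^sub>R v) \<and> (\<forall>x. x \<bullet> (B *v x) \<le> m * (norm x)^2)"
    using rayleigh[OF sym] by (rule exE)
  obtain v where v: "v \<noteq> 0" "B *v v = m *\<^sub>R v" using conjunct1[OF hm] by (elim exE conjE)
  have mb: "x \<bullet> (B *v x) \<le> m * (norm x)^2" for x using conjunct2[OF hm] by (rule spec)
  define S where "S = {l. \<exists>v. v \<noteq> 0 \<and> B *v v = l *\<^sub>R v}"
  have mS: "m \<in> S" unfolding S_def mem_Collect_eq using conjunct1[OF hm] .
  have le: "l \<le> m" if lS0: "l \<in> S" for l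
  proof -
    obtain u where u: "u \<noteq> 0" "B *v u = l *\<^sub>R u" using lS0 unfolding S_def mem_Collect_eq by (elim exE conjE)
    have "u \<bullet> (B *v u) = l * (norm u)^2" using u by (simp add: power2_norm_eq_inner)
    then have "l * (norm u)^2 \<le> m * (norm u)^2" using mb[of u] by simp
    moreover have "(norm u)^2 > 0" using u by simp
    ultimately show ?thesis by simp
  qed
  have lS: "lambda_max B = Sup S" unfolding lambda_max_def S_def by (rule refl)
  have "Sup S = m" using mS le by (rule cSup_eq_maximum)
  then have lm: "lambda_max B = m" using lS by simp
  show "\<And>x. x \<bullet> (B *v x) \<le> lambda_max B * (norm x)^2" using mb lm by simp
  show "lambda_max B \<le> c" if h: "\<And>x. x \<bullet> (B *v x) \<le> c * (norm x)^2" for c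
  proof -
    have "v \<bullet> (B *v v) = m * (norm v)^2" using v by (simp add: power2_norm_eq_inner)
    then have "m * (norm v)^2 \<le> c * (norm v)^2" using h[of v] by simp
    moreover have "(norm v)^2 > 0" using v by simp
    ultimately show ?thesis using lm by simp
  qed
qed

lemma axis_quad: "axis j 1 \<bullet> ((B::real^'n^'n) *v axis i 1) = B$j$i"
  by (simp add: matrix_vector_mult_basis column_def inner_axis')

definition Jm :: "real^'n^'n" where "Jm = (\<chi> i j. 1)"

lemma quadJ: "x \<bullet> (Jm *v x) = (ones \<bullet> x)^2"
proof -
  have "Jm *v x = (ones \<bullet> x) *\<^sub>R ones"
    by (simp add: Jm_def ones_def matrix_vector_mult_def inner_vec_def vec_eq_iff)
  then show ?thesis by (simp add: power2_eq_square inner_commute)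
qed

lemma Jm_sym: "symmetric_matrix Jm"
  by (simp add: symmetric_matrix_def Jm_def transpose_def vec_eq_iff)

lemma sphere_bound:
  fixes v :: "real^'n"
  assumes "v \<in> sphere_S"
  shows "(norm v)^2 \<le> (norm (ones::real^'n))^2"
proof (cases "v = 0")
  case True then show ?thesis by simp
next
  case False
  have "(norm v)^2 = ones \<bullet> v" using assms by (simp add: sphere_S_def)
  also have "\<dots> \<le> norm (ones::real^'n) * norm v" by (rule norm_cauchy_schwarz)
  finally have "norm v * norm v \<le> norm (ones::real^'n) * norm v" by (simp add: power2_eq_square)
  then have "norm v \<le> norm (ones::real^'n)" using False by simp
  then show ?thesis by (simp add: power_mono)
qed

lemma sym_iff: "symmetric_matrix (M::real^'n^'n) \<longleftrightarrow> (\<forall>i j. M$i$j = M$j$i)"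
  unfolding symmetric_matrix_def transpose_def vec_eq_iff by auto

theorem lemma1:
  fixes E :: "'n::finite \<Rightarrow> 'n \<Rightarrow> bool"
  assumes "simple_graph E"
  shows "lovasz_theta E = spherical_alpha E"
proof -
  define SA where "SA = (\<lambda>A::real^'n^'n. {(norm v)^2 | v. v \<in> sphere_S \<and> v \<bullet> (A *v v) = 0})"
  define T where "T = {lambda_max B | B::real^'n^'n. symmetric_matrix B \<and> (\<forall>i j. (i = j \<or> \<not> E i j) \<longrightarrow> B$i$j = 1)}"
  define U where "U = {Sup (SA A) | A. weighted_adj E A}"
  have th: "lovasz_theta E = Inf T" unfolding lovasz_theta_def T_def by (rule refl)
  have sa: "spherical_alpha E = Inf U" unfolding spherical_alpha_def U_def SA_def by (rule refl)
  have z0: "(0::real^'n) \<in> sphere_S" by (simp add: sphere_S_def)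
  have SA0: "0 \<in> SA A" for A unfolding SA_def
    by (rule CollectI, rule exI[of _ "0::real^'n"], simp add: z0)
  have SAbdd: "bdd_above (SA A)" for A
  proof (rule bdd_aboveI[of _ "(norm (ones::real^'n))^2"])
    fix r assume "r \<in> SA A"
    then obtain v :: "real^'n" where "r = (norm v)^2" "v \<in> sphere_S" unfolding SA_def by blast
    then show "r \<le> (norm (ones::real^'n))^2" using sphere_bound by simp
  qed
  have SAne: "SA A \<noteq> {}" for A using SA0 by blast
  have SAnn: "Sup (SA A) \<ge> 0" for A using cSup_upper[OF SA0 SAbdd] .
  have Ubdd: "bdd_below U"
  proof (rule bdd_belowI[of _ 0])
    fix r assume "r \<in> U"
    then obtain A where "r = Sup (SA A)" unfolding U_def by blast
    then show "0 \<le> r" using SAnn by simp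
  qed
  have w0: "weighted_adj E 0" by (simp add: weighted_adj_def sym_iff)
  have "Sup (SA 0) \<in> U" unfolding U_def
    by (rule CollectI, rule exI[of _ 0], simp only: w0 simp_thms)
  then have Une: "U \<noteq> {}" by blast
  have ge1: "lambda_max B \<ge> 1" if "symmetric_matrix B" "\<And>i. B$i$i = 1" for B :: "real^'n^'n"
  proof -
    fix i :: 'n
    have "axis i 1 \<bullet> (B *v axis i 1) \<le> lambda_max B * (norm (axis i (1::real)))^2"
      by (rule lam_char(1)[OF that(1)])
    then show ?thesis using that(2) by (simp add: axis_quad norm_axis_1)
  qed
  have Tbdd: "bdd_below T"
  proof (rule bdd_belowI[of _ 1])
    fix r assume "r \<in> T"
    then obtain B where "r = lambda_max B" "symmetric_matrix B" "\<forall>i j. (i = j \<or> \<not> E i j) \<longrightarrow> B$i$j = 1"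
      unfolding T_def by blast
    then show "1 \<le> r" using ge1 by simp
  qed
  have JmF: "symmetric_matrix (Jm::real^'n^'n) \<and> (\<forall>i j. (i = j \<or> \<not> E i j) \<longrightarrow> (Jm::real^'n^'n)$i$j = 1)"
    using Jm_sym by (simp add: Jm_def)
  have "lambda_max (Jm::real^'n^'n) \<in> T" unfolding T_def
    by (rule CollectI, rule exI[of _ "Jm::real^'n^'n"], simp add: JmF)
  then have Tne: "T \<noteq> {}" by blast
  have part1: "Inf U \<le> Inf T"
  proof (rule cInf_greatest[OF Tne])
    fix l assume "l \<in> T"
    then obtain B where B: "l = lambda_max B" "symmetric_matrix B"
      "\<forall>i j. (i = j \<or> \<not> E i j) \<longrightarrow> B$i$j = 1" unfolding T_def by blast
    have l1: "l \<ge> 1" using ge1[OF B(2)] B by simp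
    define A where "A = B - Jm"
    have wA: "weighted_adj E A" using B(2,3)
      unfolding weighted_adj_def sym_iff A_def by (auto simp: Jm_def)
    have "Sup (SA A) \<le> l"
    proof (rule cSup_least[OF SAne])
      fix r assume "r \<in> SA A"
      then obtain v where v: "r = (norm v)^2" "v \<in> sphere_S" "v \<bullet> (A *v v) = 0"
        unfolding SA_def by blast
      have "B = Jm + A" by (simp add: A_def)
      then have "v \<bullet> (B *v v) = v \<bullet> (Jm *v v) + v \<bullet> (A *v v)"
        by (simp add: matrix_vector_mult_add_rdistrib inner_add_right)
      also have "\<dots> = (ones \<bullet> v)^2" using v(3) quadJ by simp
      also have "\<dots> = r^2" using v(1,2) by (simp add: sphere_S_def)
      finally have "r^2 \<le> l * r" using lam_char(1)[OF B(2), of v] B(1) v(1) by simp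
      moreover have "r \<ge> 0" using v(1) by simp
      ultimately show "r \<le> l" using l1
        by (cases "r = 0") (auto simp: power2_eq_square mult_le_cancel_right_pos)
    qed
    moreover have "Sup (SA A) \<in> U" unfolding U_def
      by (rule CollectI, rule exI[of _ A], simp only: wA simp_thms)
    moreover have "Inf U \<le> Sup (SA A)" using calculation(2) Ubdd by (rule cInf_lower)
    ultimately show "Inf U \<le> l" by simp
  qed
  have part2: "Inf T \<le> Inf U"
  proof (rule cInf_greatest[OF Une])
    fix s0 assume "s0 \<in> U"
    then obtain A where A: "s0 = Sup (SA A)" "weighted_adj E A" unfolding U_def by blast
    have Asym: "symmetric_matrix A" and Adiag: "\<And>i. A$i$i = 0"
      and Aoff: "\<And>i j. i \<noteq> j \<Longrightarrow> \<not> E i j \<Longrightarrow> A$i$j = 0"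
      using A(2) unfolding weighted_adj_def by auto
    have s0nn: "s0 \<ge> 0" using A(1) SAnn by simp
    have key: "(ones \<bullet> u)^2 \<le> s0 * (norm u)^2" if hu: "u \<bullet> (A *v u) = 0" for u
    proof (cases "ones \<bullet> u = 0")
      case True then show ?thesis using s0nn by simp
    next
      case False
      then have un: "u \<noteq> 0" by auto
      then have nu: "(norm u)^2 > 0" by simp
      define c where "c = (ones \<bullet> u) / (norm u)^2"
      define v where "v = c *\<^sub>R u"
      have e1: "ones \<bullet> v = (ones \<bullet> u)^2 / (norm u)^2"
        by (simp add: v_def c_def power2_eq_square)
      have e2: "(norm v)^2 = (ones \<bullet> u)^2 / (norm u)^2"
        using nu by (simp add: v_def c_def power_mult_distrib power2_eq_square field_simps)
      have sv: "v \<in> sphere_S" using e1 e2 by (simp add: sphere_S_def)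
      have av: "v \<bullet> (A *v v) = 0" unfolding v_def by (simp only: quad_scale hu)
      have "(norm v)^2 \<in> SA A" unfolding SA_def
        by (rule CollectI, rule exI[of _ v], simp only: sv av simp_thms)
      then have "(norm v)^2 \<le> s0" using A(1) cSup_upper[OF _ SAbdd] by simp
      then have "(ones \<bullet> u)^2 / (norm u)^2 \<le> s0" using e2 by simp
      then show ?thesis using nu by (simp add: divide_le_eq)
    qed
    show "Inf T \<le> s0"
    proof (rule dense_ge)
      fix s' assume ss: "s0 < s'"
      define q where "q = (\<lambda>x::real^'n. s' * (norm x)^2 - (ones \<bullet> x)^2)"
      define p where "p = (\<lambda>x::real^'n. x \<bullet> (A *v x))"
      have pos: "q z > 0" if "z \<noteq> 0" "p z = 0" for z
      proof -
        have "(ones \<bullet> z)^2 \<le> s0 * (norm z)^2" using key that(2) p_def by simp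
        moreover have "s0 * (norm z)^2 < s' * (norm z)^2" using ss that(1) by simp
        ultimately show ?thesis by (simp add: q_def)
      qed
      obtain t where t: "\<And>x. t * p x \<le> q x"
      proof (cases "A = 0")
        case True
        have "0 * p x \<le> q x" for x using pos[of x] True by (cases "x = 0") (auto simp: p_def q_def)
        then show ?thesis using that by blast
      next
        case False
        then obtain i j where ij: "A$i$j \<noteq> 0" by (metis vec_eq_iff zero_index)
        have pe: "p (a *\<^sub>R x + y) = a^2 * p x + 2*a*(y \<bullet> (A *v x)) + p y" for a x y
          unfolding p_def using quad_add[OF Asym, of "a *\<^sub>R x" y] quad_scale[of a x A]
          by (simp add: matrix_vector_mult_scaleR)
        have ps: "p (c *\<^sub>R x) = c^2 * p x" for c x unfolding p_def by (rule quad_scale)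
        have qe: "q (a *\<^sub>R x + y) = a^2 * q x + 2*a*(s' * (y \<bullet> x) - (ones \<bullet> x) * (ones \<bullet> y)) + q y" for a x y
          unfolding q_def power2_norm_eq_inner
          by (simp add: inner_add_left inner_add_right inner_commute power2_eq_square algebra_simps)
        have pa: "p (axis k 1) = 0" for k unfolding p_def by (simp add: axis_quad Adiag)
        have Aji: "A$j$i = A$i$j" using Asym sym_iff by metis
        have p1: "p (1 *\<^sub>R axis i 1 + axis j 1) = 2 * A$i$j"
          using pe[of 1 "axis i 1" "axis j 1"] pa by (simp add: axis_quad Aji)
        have p2: "p ((-1) *\<^sub>R axis i 1 + axis j 1) = - 2 * A$i$j"
          using pe[of "-1" "axis i 1" "axis j 1"] pa by (simp add: axis_quad Aji)
        define x1 :: "real^'n" where "x1 = 1 *\<^sub>R axis i 1 + axis j 1"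
        define x2 :: "real^'n" where "x2 = (-1) *\<^sub>R axis i 1 + axis j 1"
        have ex: "(\<exists>x. p x > 0) \<and> (\<exists>y. p y < 0)"
        proof (cases "A$i$j > 0")
          case True
          then have "p x1 > 0" "p x2 < 0" using p1 p2 x1_def x2_def by simp_all
          then show ?thesis by blast
        next
          case False
          then have "A$i$j < 0" using ij by simp
          then have "p x1 < 0" "p x2 > 0" using p1 p2 x1_def x2_def by simp_all
          then show ?thesis by blast
        qed
        then have ex1: "\<exists>x. p x > 0" and ex2: "\<exists>y. p y < 0" by blast+
        have q0: "q 0 = 0" by (simp add: q_def)
        obtain t where "\<forall>x. t * p x \<le> q x"
          using finsler[OF qe pe ps pos q0 ex1 ex2] by blast
        then show ?thesis using that by blast
      qed
      define B where "B = Jm + t *\<^sub>R A"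
      have Bij: "B$i$j = 1 + t * A$i$j" for i j by (simp add: B_def Jm_def)
      have Ae: "\<And>i j. A$i$j = A$j$i" using Asym unfolding sym_iff by blast
      have Bfeas: "symmetric_matrix B \<and> (\<forall>i j. (i = j \<or> \<not> E i j) \<longrightarrow> B$i$j = 1)"
      proof (intro conjI allI impI)
        show "symmetric_matrix B" unfolding sym_iff Bij using Ae by simp
      next
        fix i j assume "i = j \<or> \<not> E i j"
        then have "A$i$j = 0" using Adiag Aoff by (cases "i = j") auto
        then show "B$i$j = 1" by (simp add: Bij)
      qed
      have "x \<bullet> (B *v x) \<le> s' * (norm x)^2" for x
      proof -
        have "B *v x = Jm *v x + t *\<^sub>R (A *v x)"
          by (simp add: B_def matrix_vector_mult_add_rdistrib scaleR_matrix_vector_assoc)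
        then have "x \<bullet> (B *v x) = (ones \<bullet> x)^2 + t * p x"
          by (simp add: inner_add_right quadJ p_def)
        then show ?thesis using t[of x] by (simp add: q_def)
      qed
      then have "lambda_max B \<le> s'" by (rule lam_char(2)[OF conjunct1[OF Bfeas]])
      moreover have "lambda_max B \<in> T" unfolding T_def
        by (rule CollectI, rule exI[of _ B], rule conjI[OF refl Bfeas])
      moreover have "Inf T \<le> lambda_max B" using calculation(2) Tbdd by (rule cInf_lower)
      ultimately show "Inf T \<le> s'" by simp
    qed
  qed
  show ?thesis unfolding th sa by (rule antisym[OF part2 part1])
qed

end
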